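(* Let $N_7$ be the connected, simply connected nilpotent Lie group with Lie algebra $\mathfrak{n}_7$ spanned by $X_1,\dots,X_7$ with non-trivial brackets $[X_1,X_3]=X_5,\ [X_1,X_4]=X_6,\ [X_1,X_5]=X_7,\ [X_2,X_3]=-X_6,\ [X_2,X_4]=X_5,\ [X_2,X_6]=X_7$. Let $(f_5^k)_k,(f_6^k)_k$ be sequences of nonzero real numbers with $\lim_k f_5^k=0$ and $\lim_k f_6^k=0$, and consider the sequence of coadjoint orbits $\mathcal O_k=\mathcal O_{(f_5^k,f_6^k)}$ in $\mathfrak{n}_7^*/N_7$. Then the set of limit points of $(\mathcal O_k)_k$ in $\mathfrak{n}_7^*/N_7$ is exactly $\Gamma_0$, the set of coadjoint orbits of functionals $f_1X_1^*+f_2X_2^*+f_3X_3^*+f_4X_4^*$, $(f_1,f_2,f_3,f_4)\in\mathbb R^4$.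
   Context: $N_7$ acts on $\mathfrak{n}_7^*$ by the coadjoint action $\mathrm{Ad}^*(g)f=f\circ\mathrm{Ad}(g^{-1})$, $X_1^*,\dots,X_7^*$ is the dual basis, and $\mathfrak{n}_7^*/N_7$ carries the quotient topology. The orbit $\mathcal O_{(f_5,f_6)}$ of $f_5X_5^*+f_6X_6^*$ (with $(f_5,f_6)\neq(0,0)$) equals $\{x_1X_1^*+x_2X_2^*+x_3X_3^*+x_4X_4^*+f_5X_5^*+f_6X_6^*: x_i\in\mathbb R\}$. Functionals vanishing on $X_5,X_6,X_7$ are fixed by the coadjoint action, so their orbits are singletons (these correspond to the unitary characters of $N_7$). *)

theory Defs
  imports "HOL-Analysis.Analysis" "HOL-Library.Numeral_Type"
begin

text \<open>The Lie algebra n_7 is modelled as real^7 in the basis X_1,...,X_7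
  (coordinate i of a vector is x $ i, for i = 1..7 in the index type 7),
  and its dual n_7^* as real^7 in the dual basis X_1^*,...,X_7^*, the pairing
  being the inner product.\<close>

type_synonym n7 = "real^7"
type_synonym n7dual = "real^7"

text \<open>Lie bracket, from the structure constants
  [X1,X3]=X5, [X1,X4]=X6, [X1,X5]=X7, [X2,X3]=-X6, [X2,X4]=X5, [X2,X6]=X7.\<close>
definition brkt :: "n7 \<Rightarrow> n7 \<Rightarrow> n7" where
  "brkt X Y = (\<chi> k.
     if k = 5 then X$1 * Y$3 - X$3 * Y$1 + X$2 * Y$4 - X$4 * Y$2
     else if k = 6 then X$1 * Y$4 - X$4 * Y$1 - (X$2 * Y$3 - X$3 * Y$2)
     else if k = 7 then X$1 * Y$5 - X$5 * Y$1 + X$2 * Y$6 - X$6 * Y$2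
     else 0)"

text \<open>N_7 is connected, simply connected and nilpotent, so exp : n_7 \<rightarrow> N_7 is
  a bijection; we parametrize N_7 by n_7 via g = exp X. Then
  Ad(exp X) = e^{ad X} = \<Sum>_k (ad X)^k / k!, a finite sum since ad X is
  nilpotent (ad X ^ 7 = 0 on the 7-dimensional nilpotent algebra).\<close>
definition Ad_exp :: "n7 \<Rightarrow> n7 \<Rightarrow> n7" where
  "Ad_exp X Y = (\<Sum>k<7. (1 / fact k) *\<^sub>R ((brkt X ^^ k) Y))"

text \<open>Coadjoint action: Ad^*(exp X) f = f \<circ> Ad(exp X)^{-1} = f \<circ> Ad(exp(-X)).\<close>
definition coad :: "n7 \<Rightarrow> n7dual \<Rightarrow> n7dual" where
  "coad X f = (\<chi> i. f \<bullet> Ad_exp (- X) (axis i 1))"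

definition coad_orbit :: "n7dual \<Rightarrow> n7dual set" where
  "coad_orbit f = {coad X f | X. True}"

definition orbit_space :: "n7dual set set" where
  "orbit_space = range coad_orbit"

definition quotient_topology :: "'a topology \<Rightarrow> ('a \<Rightarrow> 'b) \<Rightarrow> 'b set \<Rightarrow> 'b topology" where
  "quotient_topology X p Y =
     topology (\<lambda>U. U \<subseteq> Y \<and> openin X {x \<in> topspace X. p x \<in> U})"

definition orbit_top :: "n7dual set topology" where
  "orbit_top = quotient_topology euclidean coad_orbit orbit_space"

definition fun7 :: "real \<Rightarrow> real \<Rightarrow> real \<Rightarrow> real \<Rightarrow> real \<Rightarrow> real \<Rightarrow> real \<Rightarrow> n7dual" where
  "fun7 a1 a2 a3 a4 a5 a6 a7 = (\<chi> i.
     if i = 1 then a1 else if i = 2 then a2 else if i = 3 then a3 else if i = 4 then a4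
     else if i = 5 then a5 else if i = 6 then a6 else a7)"

end

theory Submission
  imports Defs
begin



lemma exhaust_7: fixes x :: 7 shows "x = 1 \<or> x = 2 \<or> x = 3 \<or> x = 4 \<or> x = 5 \<or> x = 6 \<or> x = 7"
proof (induct x)
  case (of_int z)
  then have "z = 0 \<or> z = 1 \<or> z = 2 \<or> z = 3 \<or> z = 4 \<or> z = 5 \<or> z = 6" by fastforce
  then show ?case by auto
qed

lemma UNIV_7: "(UNIV::7 set) = {1,2,3,4,5,6,7}" using exhaust_7 by auto

lemma sum_7: "sum f (UNIV::7 set) = f 1 + f 2 + f 3 + f 4 + f 5 + f 6 + f 7"
  unfolding UNIV_7 by (simp add: ac_simps)

lemma brkt_nth: "brkt X Y $ k =
     (if k = 5 then X$1 * Y$3 - X$3 * Y$1 + X$2 * Y$4 - X$4 * Y$2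
     else if k = 6 then X$1 * Y$4 - X$4 * Y$1 - (X$2 * Y$3 - X$3 * Y$2)
     else if k = 7 then X$1 * Y$5 - X$5 * Y$1 + X$2 * Y$6 - X$6 * Y$2
     else 0)" by (simp add: brkt_def)

lemma brkt3: "brkt X (brkt X (brkt X Y)) = 0"
  by (simp add: vec_eq_iff brkt_nth)

lemma brkt_zero: "brkt X 0 = 0" by (simp add: vec_eq_iff brkt_nth)

lemma pow_ge3: "k \<ge> 3 \<Longrightarrow> (brkt X ^^ k) Y = 0"
proof (induction k rule: dec_induct)
  case base
  then show ?case by (simp add: numeral_3_eq_3 brkt3)
next
  case (step n)
  then show ?case by (simp add: brkt_zero)
qed

lemma Ad_exp_eq: "Ad_exp X Y = Y + brkt X Y + (1/2) *\<^sub>R brkt X (brkt X Y)"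
proof -
  have "Ad_exp X Y = (\<Sum>k<3. (1 / fact k) *\<^sub>R ((brkt X ^^ k) Y))"
    unfolding Ad_exp_def
    by (rule sum.mono_neutral_right) (auto simp: pow_ge3)
  also have "\<dots> = Y + brkt X Y + (1/2) *\<^sub>R brkt X (brkt X Y)"
    by (simp add: numeral_3_eq_3 lessThan_Suc numeral_2_eq_2)
  finally show ?thesis .
qed

lemma coad_nth: "coad X f $ i = f \<bullet> Ad_exp (- X) (axis i 1)" by (simp add: coad_def)

lemma coad_formula: "coad X f = fun7
  (f$1 + f$5 * X$3 + f$6 * X$4 + f$7 * (X$5 - (X$1*X$3 + X$2*X$4)/2))
  (f$2 + f$5 * X$4 - f$6 * X$3 + f$7 * (X$6 + (X$2*X$3 - X$1*X$4)/2))
  (f$3 - f$5 * X$1 + f$6 * X$2 + f$7 * (X$1^2 - X$2^2)/2)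
  (f$4 - f$5 * X$2 - f$6 * X$1 + f$7 * X$1 * X$2)
  (f$5 - f$7 * X$1) (f$6 - f$7 * X$2) (f$7)"
  unfolding vec_eq_iff
  apply (rule allI)
  subgoal for i
  using exhaust_7[of i]
  apply (elim disjE)
  apply (simp_all add: coad_nth Ad_exp_eq inner_vec_def sum_7 brkt_nth axis_def fun7_def algebra_simps power2_eq_square)
  apply (simp add: field_simps)
  done
  done


lemma fun7_nth: "fun7 a1 a2 a3 a4 a5 a6 a7 $ 1 = a1" "fun7 a1 a2 a3 a4 a5 a6 a7 $ 2 = a2"
  "fun7 a1 a2 a3 a4 a5 a6 a7 $ 3 = a3" "fun7 a1 a2 a3 a4 a5 a6 a7 $ 4 = a4"
  "fun7 a1 a2 a3 a4 a5 a6 a7 $ 5 = a5" "fun7 a1 a2 a3 a4 a5 a6 a7 $ 6 = a6"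
  "fun7 a1 a2 a3 a4 a5 a6 a7 $ 7 = a7"
  by (simp_all add: fun7_def)

lemma fun7_eta: "fun7 (f$1) (f$2) (f$3) (f$4) (f$5) (f$6) (f$7) = f"
  unfolding vec_eq_iff
  apply (rule allI)
  subgoal for i using exhaust_7[of i] by (auto simp: fun7_nth)
  done

lemma fun7_eq: "fun7 a1 a2 a3 a4 a5 a6 a7 = fun7 b1 b2 b3 b4 b5 b6 b7 \<longleftrightarrow>
  a1 = b1 \<and> a2 = b2 \<and> a3 = b3 \<and> a4 = b4 \<and> a5 = b5 \<and> a6 = b6 \<and> a7 = b7"
  by (metis fun7_nth)

lemma coad_0: "coad 0 f = f"
  by (simp add: coad_formula fun7_eta)

lemma in_own_orbit: "f \<in> coad_orbit f"
  unfolding coad_orbit_def using coad_0 by (metis (mono_tags, lifting) mem_Collect_eq)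

lemma orbit_7: "x \<in> coad_orbit y \<Longrightarrow> x$7 = y$7"
  by (auto simp: coad_orbit_def coad_formula fun7_nth)

lemma orbit_56: "x \<in> coad_orbit y \<Longrightarrow> y$7 = 0 \<Longrightarrow> x$5 = y$5 \<and> x$6 = y$6"
  by (auto simp: coad_orbit_def coad_formula fun7_nth)

lemma plane_orbit:
  assumes "h5 \<noteq> 0 \<or> h6 \<noteq> 0"
  shows "coad_orbit (fun7 a1 a2 a3 a4 h5 h6 0) = {fun7 y1 y2 y3 y4 h5 h6 0 | y1 y2 y3 y4. True}"
proof
  show "coad_orbit (fun7 a1 a2 a3 a4 h5 h6 0) \<subseteq> {fun7 y1 y2 y3 y4 h5 h6 0 | y1 y2 y3 y4. True}"
    by (auto simp: coad_orbit_def coad_formula fun7_nth)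
next
  have D: "h5^2 + h6^2 \<noteq> 0" using assms by (simp add: sum_power2_eq_zero_iff)
  show "{fun7 y1 y2 y3 y4 h5 h6 0 | y1 y2 y3 y4. True} \<subseteq> coad_orbit (fun7 a1 a2 a3 a4 h5 h6 0)"
  proof clarify
    fix y1 y2 y3 y4
    define D where "D = h5^2 + h6^2"
    define d1 where "d1 = y1 - a1"
    define d2 where "d2 = y2 - a2"
    define d3 where "d3 = y3 - a3"
    define d4 where "d4 = y4 - a4"
    have Dnz: "D \<noteq> 0" using D D_def by simp
    have aux: "\<And>p q A B d. p*A + q*B = d*D \<Longrightarrow> p*(A/D) + q*(B/D) = d"
      using Dnz by (simp add: field_simps)
    define x1 where "x1 = -(h5*d3 + h6*d4)/D"
    define x2 where "x2 = (h6*d3 - h5*d4)/D"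
    define x3 where "x3 = (h5*d1 - h6*d2)/D"
    define x4 where "x4 = (h6*d1 + h5*d2)/D"
    have e1: "h5*x3 + h6*x4 = d1" unfolding x3_def x4_def
      by (rule aux) (simp add: D_def power2_eq_square algebra_simps)
    have e2: "h5*x4 + (-h6)*x3 = d2" unfolding x3_def x4_def
      by (rule aux) (simp add: D_def power2_eq_square algebra_simps)
    have e3: "(-h5)*x1 + h6*x2 = d3" unfolding x1_def x2_def
      by (rule aux) (simp add: D_def power2_eq_square algebra_simps)
    have e4: "(-h5)*x2 + (-h6)*x1 = d4" unfolding x1_def x2_def
      by (rule aux) (simp add: D_def power2_eq_square algebra_simps)
    define X :: n7 where "X = fun7 x1 x2 x3 x4 0 0 0"
    have "coad X (fun7 a1 a2 a3 a4 h5 h6 0) = fun7 y1 y2 y3 y4 h5 h6 0"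
      unfolding coad_formula fun7_nth fun7_eq X_def
      using e1 e2 e3 e4 unfolding d1_def d2_def d3_def d4_def
      by simp
    then show "fun7 y1 y2 y3 y4 h5 h6 0 \<in> coad_orbit (fun7 a1 a2 a3 a4 h5 h6 0)"
      unfolding coad_orbit_def by (metis (mono_tags, lifting) mem_Collect_eq)
  qed
qed

lemma plane_orbit':
  assumes "h5 \<noteq> 0 \<or> h6 \<noteq> 0"
  shows "coad_orbit (fun7 a1 a2 a3 a4 h5 h6 0) = coad_orbit (fun7 0 0 0 0 h5 h6 0)"
  using plane_orbit[OF assms] by simp


lemma istop: "istopology (\<lambda>U. U \<subseteq> orbit_space \<and> openin euclidean {x \<in> topspace euclidean. coad_orbit x \<in> U})"
proof -
  have 1: "S \<inter> T \<subseteq> orbit_space \<and> open {x. coad_orbit x \<in> S \<inter> T}"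
    if "S \<subseteq> orbit_space \<and> open {x. coad_orbit x \<in> S}" "T \<subseteq> orbit_space \<and> open {x. coad_orbit x \<in> T}"
    for S T :: "n7dual set set"
  proof -
    have "{x. coad_orbit x \<in> S \<inter> T} = {x. coad_orbit x \<in> S} \<inter> {x. coad_orbit x \<in> T}" by auto
    then show ?thesis using that by auto
  qed
  have 2: "\<Union>K \<subseteq> orbit_space \<and> open {x. coad_orbit x \<in> \<Union>K}"
    if K: "\<forall>S\<in>K. S \<subseteq> orbit_space \<and> open {x. coad_orbit x \<in> S}" for K :: "n7dual set set set"
  proof -
    have "{x. coad_orbit x \<in> \<Union>K} = (\<Union>S\<in>K. {x. coad_orbit x \<in> S})" by auto
    then show ?thesis using K by auto
  qed
  show ?thesis unfolding istopology_def using 1 2 by simp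
qed

lemma openin_orbit_top: "openin orbit_top U \<longleftrightarrow> U \<subseteq> orbit_space \<and> open {x. coad_orbit x \<in> U}"
  unfolding orbit_top_def quotient_topology_def topology_inverse'[OF istop] by simp

lemma topspace_orbit_top: "topspace orbit_top = orbit_space"
proof -
  have "openin orbit_top orbit_space" unfolding openin_orbit_top orbit_space_def by simp
  then show ?thesis using openin_subset[of orbit_top] openin_orbit_top
    by (metis openin_topspace subset_antisym)
qed

lemma sat_open:
  assumes "open S" and "\<And>x y. y \<in> S \<Longrightarrow> x \<in> coad_orbit y \<Longrightarrow> x \<in> S"
  shows "openin orbit_top (coad_orbit ` S)"
proof -
  have "{x. coad_orbit x \<in> coad_orbit ` S} = S"
  proof
    show "{x. coad_orbit x \<in> coad_orbit ` S} \<subseteq> S"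
      using assms(2) in_own_orbit by (metis (mono_tags, lifting) image_iff mem_Collect_eq subsetI)
  qed auto
  then show ?thesis unfolding openin_orbit_top orbit_space_def using assms(1) by auto
qed

lemma ev_contra: "eventually P sequentially \<Longrightarrow> (\<And>k. \<not> P k) \<Longrightarrow> False"
  by (metis eventually_sequentially order_refl)

theorem mainTheorem3:
  fixes f5 f6 :: "nat \<Rightarrow> real"
  assumes "\<And>k. f5 k \<noteq> 0" and "\<And>k. f6 k \<noteq> 0"
    and "f5 \<longlonglongrightarrow> 0" and "f6 \<longlonglongrightarrow> 0"
  shows "{Orb \<in> topspace orbit_top.
            limitin orbit_top (\<lambda>k. coad_orbit (fun7 0 0 0 0 (f5 k) (f6 k) 0)) Orb sequentially}
         = {coad_orbit (fun7 a1 a2 a3 a4 0 0 0) | a1 a2 a3 a4. True}"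
proof
  show "{Orb \<in> topspace orbit_top.
            limitin orbit_top (\<lambda>k. coad_orbit (fun7 0 0 0 0 (f5 k) (f6 k) 0)) Orb sequentially}
         \<subseteq> {coad_orbit (fun7 a1 a2 a3 a4 0 0 0) | a1 a2 a3 a4. True}"
  proof clarify
    fix Orb assume O: "Orb \<in> topspace orbit_top"
      and L: "limitin orbit_top (\<lambda>k. coad_orbit (fun7 0 0 0 0 (f5 k) (f6 k) 0)) Orb sequentially"
    obtain g where g: "Orb = coad_orbit g" using O unfolding topspace_orbit_top orbit_space_def by auto
    have g7: "g$7 = 0"
    proof (rule ccontr)
      assume ne: "g$7 \<noteq> 0"
      let ?S = "{x::n7dual. x$7 \<noteq> 0}"
      have "openin orbit_top (coad_orbit ` ?S)"
        by (rule sat_open) (auto intro!: open_Collect_neq continuous_intros dest: orbit_7)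
      moreover have "Orb \<in> coad_orbit ` ?S" using g ne by auto
      ultimately have "eventually (\<lambda>k. coad_orbit (fun7 0 0 0 0 (f5 k) (f6 k) 0) \<in> coad_orbit ` ?S) sequentially"
        using L by (simp add: limitin_def)
      then show False
      proof (rule ev_contra)
        fix k show "coad_orbit (fun7 0 0 0 0 (f5 k) (f6 k) 0) \<notin> coad_orbit ` ?S"
        proof
          assume "coad_orbit (fun7 0 0 0 0 (f5 k) (f6 k) 0) \<in> coad_orbit ` ?S"
          then obtain y where "y$7 \<noteq> 0" "coad_orbit (fun7 0 0 0 0 (f5 k) (f6 k) 0) = coad_orbit y" by auto
          then show False using in_own_orbit orbit_7 fun7_nth(7) by metis
        qed
      qed
    qed
    have g5: "g$5 = 0"
    proof (rule ccontr)
      assume ne: "g$5 \<noteq> 0"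
      let ?S = "{x::n7dual. x$7 \<noteq> 0} \<union> {x. \<bar>g$5\<bar>/2 < \<bar>x$5\<bar>}"
      have "openin orbit_top (coad_orbit ` ?S)"
      proof (rule sat_open)
        show "open ?S" by (intro open_Un open_Collect_neq open_Collect_less continuous_intros)
      next
        fix x y assume "y \<in> ?S" "x \<in> coad_orbit y"
        then show "x \<in> ?S" using orbit_7[of x y] orbit_56[of x y] by auto
      qed
      moreover have "Orb \<in> coad_orbit ` ?S" using g ne by (auto intro!: imageI)
      ultimately have "eventually (\<lambda>k. coad_orbit (fun7 0 0 0 0 (f5 k) (f6 k) 0) \<in> coad_orbit ` ?S) sequentially"
        using L by (simp add: limitin_def)
      moreover have "eventually (\<lambda>k. \<bar>f5 k\<bar> < \<bar>g$5\<bar>/2) sequentially"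
        using order_tendstoD(2)[OF tendsto_rabs[OF assms(3)], of "\<bar>g$5\<bar>/2"] ne by simp
      ultimately have "eventually (\<lambda>k. coad_orbit (fun7 0 0 0 0 (f5 k) (f6 k) 0) \<in> coad_orbit ` ?S
           \<and> \<bar>f5 k\<bar> < \<bar>g$5\<bar>/2) sequentially" by (rule eventually_conj)
      then show False
      proof (rule ev_contra)
        fix k show "\<not> (coad_orbit (fun7 0 0 0 0 (f5 k) (f6 k) 0) \<in> coad_orbit ` ?S \<and> \<bar>f5 k\<bar> < \<bar>g$5\<bar>/2)"
        proof
          assume "coad_orbit (fun7 0 0 0 0 (f5 k) (f6 k) 0) \<in> coad_orbit ` ?S \<and> \<bar>f5 k\<bar> < \<bar>g$5\<bar>/2"
          then obtain y where y: "y \<in> ?S" "coad_orbit (fun7 0 0 0 0 (f5 k) (f6 k) 0) = coad_orbit y"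
            and lt: "\<bar>f5 k\<bar> < \<bar>g$5\<bar>/2" by auto
          have m: "fun7 0 0 0 0 (f5 k) (f6 k) 0 \<in> coad_orbit y" using y(2) in_own_orbit by metis
          have "y$7 = 0" using orbit_7[OF m] by (simp add: fun7_nth)
          then show False using y(1) orbit_56[OF m] lt by (auto simp: fun7_nth)
        qed
      qed
    qed
    have g6: "g$6 = 0"
    proof (rule ccontr)
      assume ne: "g$6 \<noteq> 0"
      let ?S = "{x::n7dual. x$7 \<noteq> 0} \<union> {x. \<bar>g$6\<bar>/2 < \<bar>x$6\<bar>}"
      have "openin orbit_top (coad_orbit ` ?S)"
      proof (rule sat_open)
        show "open ?S" by (intro open_Un open_Collect_neq open_Collect_less continuous_intros)
      next
        fix x y assume "y \<in> ?S" "x \<in> coad_orbit y"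
        then show "x \<in> ?S" using orbit_7[of x y] orbit_56[of x y] by auto
      qed
      moreover have "Orb \<in> coad_orbit ` ?S" using g ne by (auto intro!: imageI)
      ultimately have "eventually (\<lambda>k. coad_orbit (fun7 0 0 0 0 (f5 k) (f6 k) 0) \<in> coad_orbit ` ?S) sequentially"
        using L by (simp add: limitin_def)
      moreover have "eventually (\<lambda>k. \<bar>f6 k\<bar> < \<bar>g$6\<bar>/2) sequentially"
        using order_tendstoD(2)[OF tendsto_rabs[OF assms(4)], of "\<bar>g$6\<bar>/2"] ne by simp
      ultimately have "eventually (\<lambda>k. coad_orbit (fun7 0 0 0 0 (f5 k) (f6 k) 0) \<in> coad_orbit ` ?S
           \<and> \<bar>f6 k\<bar> < \<bar>g$6\<bar>/2) sequentially" by (rule eventually_conj)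
      then show False
      proof (rule ev_contra)
        fix k show "\<not> (coad_orbit (fun7 0 0 0 0 (f5 k) (f6 k) 0) \<in> coad_orbit ` ?S \<and> \<bar>f6 k\<bar> < \<bar>g$6\<bar>/2)"
        proof
          assume "coad_orbit (fun7 0 0 0 0 (f5 k) (f6 k) 0) \<in> coad_orbit ` ?S \<and> \<bar>f6 k\<bar> < \<bar>g$6\<bar>/2"
          then obtain y where y: "y \<in> ?S" "coad_orbit (fun7 0 0 0 0 (f5 k) (f6 k) 0) = coad_orbit y"
            and lt: "\<bar>f6 k\<bar> < \<bar>g$6\<bar>/2" by auto
          have m: "fun7 0 0 0 0 (f5 k) (f6 k) 0 \<in> coad_orbit y" using y(2) in_own_orbit by metis
          have "y$7 = 0" using orbit_7[OF m] by (simp add: fun7_nth)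
          then show False using y(1) orbit_56[OF m] lt by (auto simp: fun7_nth)
        qed
      qed
    qed
    have "Orb = coad_orbit (fun7 (g$1) (g$2) (g$3) (g$4) 0 0 0)"
      using g g5 g6 g7 fun7_eta[of g] by simp
    then show "\<exists>a1 a2 a3 a4. Orb = coad_orbit (fun7 a1 a2 a3 a4 0 0 0) \<and> True" by blast
  qed
next
  show "{coad_orbit (fun7 a1 a2 a3 a4 0 0 0) | a1 a2 a3 a4. True} \<subseteq> {Orb \<in> topspace orbit_top.
            limitin orbit_top (\<lambda>k. coad_orbit (fun7 0 0 0 0 (f5 k) (f6 k) 0)) Orb sequentially}"
  proof clarify
    fix a1 a2 a3 a4
    let ?g = "fun7 a1 a2 a3 a4 0 0 0"
    have T: "coad_orbit ?g \<in> topspace orbit_top" unfolding topspace_orbit_top orbit_space_def by simp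
    have tends: "(\<lambda>k. fun7 a1 a2 a3 a4 (f5 k) (f6 k) 0) \<longlonglongrightarrow> ?g"
    proof (rule vec_tendstoI)
      fix i :: 7
      show "((\<lambda>k. fun7 a1 a2 a3 a4 (f5 k) (f6 k) 0 $ i) \<longlongrightarrow> ?g $ i) sequentially"
        using exhaust_7[of i] assms(3,4) by (auto simp: fun7_nth)
    qed
    have "limitin orbit_top (\<lambda>k. coad_orbit (fun7 0 0 0 0 (f5 k) (f6 k) 0)) (coad_orbit ?g) sequentially"
      unfolding limitin_def
    proof (intro conjI allI impI T)
      fix U assume U: "openin orbit_top U \<and> coad_orbit ?g \<in> U"
      then have "open {x. coad_orbit x \<in> U}" "?g \<in> {x. coad_orbit x \<in> U}"
        unfolding openin_orbit_top by auto
      then have "eventually (\<lambda>k. fun7 a1 a2 a3 a4 (f5 k) (f6 k) 0 \<in> {x. coad_orbit x \<in> U}) sequentially"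
        by (rule topological_tendstoD[OF tends])
      then show "eventually (\<lambda>k. coad_orbit (fun7 0 0 0 0 (f5 k) (f6 k) 0) \<in> U) sequentially"
        using plane_orbit'[of _ _ a1 a2 a3 a4] assms(1) by (auto elim!: eventually_mono)
    qed
    then show "coad_orbit ?g \<in> topspace orbit_top \<and>
      limitin orbit_top (\<lambda>k. coad_orbit (fun7 0 0 0 0 (f5 k) (f6 k) 0)) (coad_orbit ?g) sequentially"
      using T by simp
  qed
qed

end
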